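(* Let $\mathcal T=(T(t))_{t\ge0}$ be a $C_0$-semigroup on a Hilbert space $H$, and assume there exists $t'>0$ such that $T(t')$ is bounded from below. Then: (i) $\mathcal T$ is similar to a semigroup of contractions (i.e. $\|RT(t)R^{-1}\|\le1$ for all $t\ge0$ for some invertible $R\in\mathcal L(H)$) if and only if there exists $\tau>0$ such that $T(\tau)$ is similar to a contraction; (ii) $\mathcal T$ is similar to a quasi-contraction semigroup, i.e. there exist an invertible $R\in\mathcal L(H)$ and $\lambda\in\mathbb R$ with $\|RT(t)R^{-1}\|\le e^{\lambda t}$ for all $t\ge0$.
   Context: An operator $S\in\mathcal L(H)$ is bounded from below if there is $c>0$ with $\|Sh\|\ge c\|h\|$ for all $h\in H$. $T\in\mathcal L(H)$ is similar to a contraction if $\|RTR^{-1}\|\le1$ for some invertible $R\in\mathcal L(H)$. *)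

theory Defs
  imports "HOL-Analysis.Analysis"
begin

text \<open>A complex Hilbert space is modelled as a real Hilbert space (real inner product
space, complete) together with a complex structure J (multiplication by i), which is an
isometry with J o J = -id. Bounded complex-linear operators are the bounded real-linear
operators commuting with J.\<close>

definition complex_structure :: "('a::real_normed_vector \<Rightarrow>\<^sub>L 'a) \<Rightarrow> bool" where
  "complex_structure J \<longleftrightarrow> J o\<^sub>L J = - id_blinfun \<and> (\<forall>x. norm (J x) = norm x)"

definition complex_linear_op :: "('a::real_normed_vector \<Rightarrow>\<^sub>L 'a) \<Rightarrow> ('a \<Rightarrow>\<^sub>L 'a) \<Rightarrow> bool" where
  "complex_linear_op J A \<longleftrightarrow> A o\<^sub>L J = J o\<^sub>L A"

text \<open>C0-semigroup (values for t < 0 are irrelevant).\<close>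
definition C0_semigroup :: "(real \<Rightarrow> ('a::real_normed_vector \<Rightarrow>\<^sub>L 'a)) \<Rightarrow> bool" where
  "C0_semigroup T \<longleftrightarrow> T 0 = id_blinfun
     \<and> (\<forall>s t. 0 \<le> s \<longrightarrow> 0 \<le> t \<longrightarrow> T (s + t) = T s o\<^sub>L T t)
     \<and> (\<forall>x. ((\<lambda>t. blinfun_apply (T t) x) \<longlongrightarrow> x) (at_right 0))"

definition bounded_below :: "('a::real_normed_vector \<Rightarrow>\<^sub>L 'a) \<Rightarrow> bool" where
  "bounded_below S \<longleftrightarrow> (\<exists>c>0. \<forall>h. c * norm h \<le> norm (S h))"

definition invertible_pair :: "('a::real_normed_vector \<Rightarrow>\<^sub>L 'a) \<Rightarrow> ('a \<Rightarrow>\<^sub>L 'a) \<Rightarrow> ('a \<Rightarrow>\<^sub>L 'a) \<Rightarrow> bool" where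
  "invertible_pair J R R' \<longleftrightarrow> complex_linear_op J R \<and> R o\<^sub>L R' = id_blinfun \<and> R' o\<^sub>L R = id_blinfun"

definition similar_to_contraction :: "('a::real_normed_vector \<Rightarrow>\<^sub>L 'a) \<Rightarrow> ('a \<Rightarrow>\<^sub>L 'a) \<Rightarrow> bool" where
  "similar_to_contraction J A \<longleftrightarrow> (\<exists>R R'. invertible_pair J R R' \<and> norm (R o\<^sub>L A o\<^sub>L R') \<le> 1)"

definition similar_to_contraction_semigroup :: "('a::real_normed_vector \<Rightarrow>\<^sub>L 'a) \<Rightarrow> (real \<Rightarrow> ('a \<Rightarrow>\<^sub>L 'a)) \<Rightarrow> bool" where
  "similar_to_contraction_semigroup J T \<longleftrightarrow>
     (\<exists>R R'. invertible_pair J R R' \<and> (\<forall>t\<ge>0. norm (R o\<^sub>L T t o\<^sub>L R') \<le> 1))"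

definition similar_to_quasi_contraction_semigroup :: "('a::real_normed_vector \<Rightarrow>\<^sub>L 'a) \<Rightarrow> (real \<Rightarrow> ('a \<Rightarrow>\<^sub>L 'a)) \<Rightarrow> bool" where
  "similar_to_quasi_contraction_semigroup J T \<longleftrightarrow>
     (\<exists>R R' (lam::real). invertible_pair J R R' \<and> (\<forall>t\<ge>0. norm (R o\<^sub>L T t o\<^sub>L R') \<le> exp (lam * t)))"

end

theory Submission
  imports Defs "HOL-Computational_Algebra.Formal_Power_Series"
begin

lemma blinfun_Cauchy_convergent:
  fixes X::"nat \<Rightarrow> 'a::real_normed_vector \<Rightarrow>\<^sub>L 'b::{real_normed_vector,complete_space}"
  assumes "Cauchy X"
  shows "convergent X"
proof -
  {
    fix x::'a
    {
      fix x::'a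
      assume "norm x \<le> 1"
      have "Cauchy (\<lambda>n. X n x)"
      proof (rule CauchyI)
        fix e::real
        assume "0 < e"
        from CauchyD[OF \<open>Cauchy X\<close> \<open>0 < e\<close>] obtain M
          where M: "\<And>m n. m \<ge> M \<Longrightarrow> n \<ge> M \<Longrightarrow> norm (X m - X n) < e"
          by auto
        show "\<exists>M. \<forall>m\<ge>M. \<forall>n\<ge>M. norm (X m x - X n x) < e"
        proof (safe intro!: exI[where x=M])
          fix m n
          assume le: "M \<le> m" "M \<le> n"
          have "norm (X m x - X n x) = norm ((X m - X n) x)"
            by (simp add: blinfun.bilinear_simps)
          also have "\<dots> \<le> norm (X m - X n) * norm x"
             by (rule norm_blinfun)
          also have "\<dots> \<le> norm (X m - X n) * 1"
            using \<open>norm x \<le> 1\<close> norm_ge_zero by (rule mult_left_mono)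
          also have "\<dots> = norm (X m - X n)" by simp
          also have "\<dots> < e" using le by fact
          finally show "norm (X m x - X n x) < e" .
        qed
      qed
      hence "convergent (\<lambda>n. X n x)"
        by (metis Cauchy_convergent_iff)
    } note convergent_norm1 = this
    define y where "y = x /\<^sub>R norm x"
    have y: "norm y \<le> 1" and xy: "x = norm x *\<^sub>R y"
      by (simp_all add: y_def inverse_eq_divide)
    have "convergent (\<lambda>n. norm x *\<^sub>R X n y)"
      by (intro bounded_bilinear.convergent[OF bounded_bilinear_scaleR] convergent_const
        convergent_norm1 y)
    also have "(\<lambda>n. norm x *\<^sub>R X n y) = (\<lambda>n. X n x)"
      by (subst xy) (simp add: blinfun.bilinear_simps)
    finally have "convergent (\<lambda>n. X n x)" .
  }
  then obtain v where v: "\<And>x. (\<lambda>n. X n x) \<longlonglongrightarrow> v x"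
    unfolding convergent_def
    by metis

  have "Cauchy (\<lambda>n. norm (X n))"
  proof (rule CauchyI)
    fix e::real
    assume "e > 0"
    from CauchyD[OF \<open>Cauchy X\<close> \<open>0 < e\<close>] obtain M
      where M: "\<And>m n. m \<ge> M \<Longrightarrow> n \<ge> M \<Longrightarrow> norm (X m - X n) < e"
      by auto
    show "\<exists>M. \<forall>m\<ge>M. \<forall>n\<ge>M. norm (norm (X m) - norm (X n)) < e"
    proof (safe intro!: exI[where x=M])
      fix m n assume mn: "m \<ge> M" "n \<ge> M"
      have "norm (norm (X m) - norm (X n)) \<le> norm (X m - X n)"
        by (metis norm_triangle_ineq3 real_norm_def)
      also have "\<dots> < e" using mn by fact
      finally show "norm (norm (X m) - norm (X n)) < e" .
    qed
  qed
  then obtain K where K: "(\<lambda>n. norm (X n)) \<longlonglongrightarrow> K"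
    unfolding Cauchy_convergent_iff convergent_def
    by metis

  have "bounded_linear v"
  proof
    fix x y and r::real
    from tendsto_add[OF v[of x] v [of y]] v[of "x + y", unfolded blinfun.bilinear_simps]
      tendsto_scaleR[OF tendsto_const[of r] v[of x]] v[of "r *\<^sub>R x", unfolded blinfun.bilinear_simps]
    show "v (x + y) = v x + v y" "v (r *\<^sub>R x) = r *\<^sub>R v x"
      by (metis (poly_guards_query) LIMSEQ_unique)+
    show "\<exists>K. \<forall>x. norm (v x) \<le> norm x * K"
    proof (safe intro!: exI[where x=K])
      fix x
      have "norm (v x) \<le> K * norm x"
        by (rule tendsto_le[OF _ tendsto_mult[OF K tendsto_const] tendsto_norm[OF v]])
          (auto simp: norm_blinfun)
      thus "norm (v x) \<le> norm x * K"
        by (simp add: ac_simps)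
    qed
  qed
  hence Bv: "\<And>x. (\<lambda>n. X n x) \<longlonglongrightarrow> Blinfun v x"
    by (auto simp: bounded_linear_Blinfun_apply v)

  have "X \<longlonglongrightarrow> Blinfun v"
  proof (rule LIMSEQ_I)
    fix r::real assume "r > 0"
    define r' where "r' = r / 2"
    have "0 < r'" "r' < r" using \<open>r > 0\<close> by (simp_all add: r'_def)
    from CauchyD[OF \<open>Cauchy X\<close> \<open>r' > 0\<close>]
    obtain M where M: "\<And>m n. m \<ge> M \<Longrightarrow> n \<ge> M \<Longrightarrow> norm (X m - X n) < r'"
      by metis
    show "\<exists>no. \<forall>n\<ge>no. norm (X n - Blinfun v) < r"
    proof (safe intro!: exI[where x=M])
      fix n assume n: "M \<le> n"
      have "norm (X n - Blinfun v) \<le> r'"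
      proof (rule norm_blinfun_bound)
        fix x
        have "eventually (\<lambda>m. m \<ge> M) sequentially"
          by (metis eventually_ge_at_top)
        hence ev_le: "eventually (\<lambda>m. norm (X n x - X m x) \<le> r' * norm x) sequentially"
        proof eventually_elim
          case (elim m)
          have "norm (X n x - X m x) = norm ((X n - X m) x)"
            by (simp add: blinfun.bilinear_simps)
          also have "\<dots> \<le> norm ((X n - X m)) * norm x"
            by (rule norm_blinfun)
          also have "\<dots> \<le> r' * norm x"
            using M[OF n elim] by (simp add: mult_right_mono)
          finally show ?case .
        qed
        have tendsto_v: "(\<lambda>m. norm (X n x - X m x)) \<longlonglongrightarrow> norm (X n x - Blinfun v x)"
          by (auto intro!: tendsto_intros Bv)
        show "norm ((X n - Blinfun v) x) \<le> r' * norm x"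
          by (auto intro!: tendsto_upperbound tendsto_v ev_le simp: blinfun.bilinear_simps)
      qed (simp add: \<open>0 < r'\<close> less_imp_le)
      thus "norm (X n - Blinfun v) < r"
        by (metis \<open>r' < r\<close> le_less_trans)
    qed
  qed
  thus "convergent X"
    by (rule convergentI)
qed

lemma summable_norm_cancel_gen:
  fixes f :: "nat \<Rightarrow> 'c::real_normed_vector"
  assumes cc: "\<And>X::nat \<Rightarrow> 'c. Cauchy X \<Longrightarrow> convergent X"
    and s: "summable (\<lambda>n. norm (f n))"
  shows "summable f"
proof -
  have "Cauchy (\<lambda>n. \<Sum>i<n. norm (f i))"
    using s by (simp add: convergent_Cauchy summable_iff_convergent)
  have "Cauchy (\<lambda>n. \<Sum>i<n. f i)"
  proof (rule CauchyI)
    fix e :: real assume "e > 0"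
    from CauchyD[OF \<open>Cauchy (\<lambda>n. \<Sum>i<n. norm (f i))\<close> this] obtain M
      where M: "\<And>m n. m \<ge> M \<Longrightarrow> n \<ge> M \<Longrightarrow> norm ((\<Sum>i<m. norm (f i)) - (\<Sum>i<n. norm (f i))) < e"
      by blast
    have *: "norm ((\<Sum>i<m. f i) - (\<Sum>i<n. f i)) < e" if "m \<ge> M" "n \<ge> M" "n \<le> m" for m n
    proof -
      have "(\<Sum>i<m. f i) - (\<Sum>i<n. f i) = (\<Sum>i\<in>{n..<m}. f i)"
        using that by (simp add: sum_diff[symmetric] lessThan_minus_lessThan)
      moreover have "(\<Sum>i<m. norm (f i)) - (\<Sum>i<n. norm (f i)) = (\<Sum>i\<in>{n..<m}. norm (f i))"
        using that by (simp add: sum_diff[symmetric] lessThan_minus_lessThan)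
      moreover have "norm (\<Sum>i\<in>{n..<m}. f i) \<le> (\<Sum>i\<in>{n..<m}. norm (f i))" by (rule norm_sum)
      ultimately show ?thesis using M[OF that(1,2)] by simp
    qed
    show "\<exists>M. \<forall>m\<ge>M. \<forall>n\<ge>M. norm ((\<Sum>i<m. f i) - (\<Sum>i<n. f i)) < e"
    proof (intro exI allI impI)
      fix m n assume "m \<ge> M" "n \<ge> M"
      then show "norm ((\<Sum>i<m. f i) - (\<Sum>i<n. f i)) < e"
        using *[of m n] *[of n m] by (cases "n \<le> m") (auto simp: norm_minus_commute)
    qed
  qed
  then show ?thesis using cc by (simp add: summable_iff_convergent)
qed

lemma summable_norm_cancel_blinfun:
  fixes f :: "nat \<Rightarrow> ('a::real_normed_vector \<Rightarrow>\<^sub>L 'b::{real_normed_vector,complete_space})"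
  assumes "summable (\<lambda>n. norm (f n))"
  shows "summable f"
  using summable_norm_cancel_gen[OF blinfun_Cauchy_convergent assms] .

lemma bl_comp_assoc: "(A o\<^sub>L B) o\<^sub>L C = A o\<^sub>L (B o\<^sub>L C)"
  by (rule blinfun_eqI) simp
lemma bl_id_left[simp]: "id_blinfun o\<^sub>L A = A"
  by (rule blinfun_eqI) simp
lemma bl_id_right[simp]: "A o\<^sub>L id_blinfun = A"
  by (rule blinfun_eqI) simp

lemma compose_Cauchy_product_sums:
  fixes a b :: "nat \<Rightarrow> ('a::{real_normed_vector,complete_space} \<Rightarrow>\<^sub>L 'a)"
  assumes a: "summable (\<lambda>k. norm (a k))"
    and b: "summable (\<lambda>k. norm (b k))"
  shows "(\<lambda>k. \<Sum>i\<le>k. a i o\<^sub>L b (k - i)) sums ((\<Sum>k. a k) o\<^sub>L (\<Sum>k. b k))"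
proof -
  interpret bb: bounded_bilinear "(o\<^sub>L) :: ('a \<Rightarrow>\<^sub>L 'a) \<Rightarrow> _ \<Rightarrow> _"
    by (rule bounded_bilinear_blinfun_compose)
  let ?S1 = "\<lambda>n::nat. {..<n} \<times> {..<n}"
  let ?S2 = "\<lambda>n::nat. {(i,j). i + j < n}"
  have S1_mono: "\<And>m n. m \<le> n \<Longrightarrow> ?S1 m \<subseteq> ?S1 n" by auto
  have S2_le_S1: "\<And>n. ?S2 n \<subseteq> ?S1 n" by auto
  have S1_le_S2: "\<And>n. ?S1 (n div 2) \<subseteq> ?S2 n" by auto
  have finite_S1: "\<And>n. finite (?S1 n)" by simp
  with S2_le_S1 have finite_S2: "\<And>n. finite (?S2 n)" by (rule finite_subset)
  let ?g = "\<lambda>(i,j). a i o\<^sub>L b j"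
  let ?f = "\<lambda>(i,j). norm (a i) * norm (b j)"
  have f_nonneg: "\<And>x. 0 \<le> ?f x" by auto
  then have norm_sum_f: "\<And>A. norm (sum ?f A) = sum ?f A"
    unfolding real_norm_def
    by (simp only: abs_of_nonneg sum_nonneg [rule_format])
  have sp: "(\<Sum>k<n. a k) o\<^sub>L (\<Sum>k<n. b k) = sum ?g (?S1 n)" for n
    unfolding bb.sum_left by (simp add: bb.sum_right sum.cartesian_product)
  have "(\<lambda>n. (\<Sum>k<n. a k) o\<^sub>L (\<Sum>k<n. b k)) \<longlonglongrightarrow> ((\<Sum>k. a k) o\<^sub>L (\<Sum>k. b k))"
    by (intro bb.tendsto summable_LIMSEQ summable_norm_cancel_blinfun [OF a] summable_norm_cancel_blinfun [OF b])
  then have 1: "(\<lambda>n. sum ?g (?S1 n)) \<longlonglongrightarrow> ((\<Sum>k. a k) o\<^sub>L (\<Sum>k. b k))"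
    by (simp only: sp)
  have "(\<lambda>n. (\<Sum>k<n. norm (a k)) * (\<Sum>k<n. norm (b k))) \<longlonglongrightarrow> (\<Sum>k. norm (a k)) * (\<Sum>k. norm (b k))"
    using a b by (intro tendsto_mult summable_LIMSEQ)
  then have "(\<lambda>n. sum ?f (?S1 n)) \<longlonglongrightarrow> (\<Sum>k. norm (a k)) * (\<Sum>k. norm (b k))"
    by (simp only: sum_product sum.Sigma [rule_format] finite_lessThan)
  then have "convergent (\<lambda>n. sum ?f (?S1 n))"
    by (rule convergentI)
  then have Cauchy: "Cauchy (\<lambda>n. sum ?f (?S1 n))"
    by (rule convergent_Cauchy)
  have "Zfun (\<lambda>n. sum ?f (?S1 n - ?S2 n)) sequentially"
  proof (rule ZfunI, simp only: eventually_sequentially norm_sum_f)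
    fix r :: real
    assume r: "0 < r"
    from CauchyD [OF Cauchy r] obtain N
      where "\<forall>m\<ge>N. \<forall>n\<ge>N. norm (sum ?f (?S1 m) - sum ?f (?S1 n)) < r" ..
    then have "\<And>m n. N \<le> n \<Longrightarrow> n \<le> m \<Longrightarrow> norm (sum ?f (?S1 m - ?S1 n)) < r"
      by (simp only: sum_diff finite_S1 S1_mono)
    then have N: "\<And>m n. N \<le> n \<Longrightarrow> n \<le> m \<Longrightarrow> sum ?f (?S1 m - ?S1 n) < r"
      by (simp only: norm_sum_f)
    show "\<exists>N. \<forall>n\<ge>N. sum ?f (?S1 n - ?S2 n) < r"
    proof (intro exI allI impI)
      fix n
      assume "2 * N \<le> n"
      then have n: "N \<le> n div 2" by simp
      have "sum ?f (?S1 n - ?S2 n) \<le> sum ?f (?S1 n - ?S1 (n div 2))"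
        by (intro sum_mono2 finite_Diff finite_S1 f_nonneg Diff_mono subset_refl S1_le_S2)
      also have "\<dots> < r"
        using n div_le_dividend by (rule N)
      finally show "sum ?f (?S1 n - ?S2 n) < r" .
    qed
  qed
  then have "Zfun (\<lambda>n. sum ?g (?S1 n - ?S2 n)) sequentially"
    apply (rule Zfun_le [rule_format])
    apply (simp only: norm_sum_f)
    apply (rule order_trans [OF norm_sum sum_mono])
    apply (auto simp add: norm_blinfun_compose)
    done
  then have 2: "(\<lambda>n. sum ?g (?S1 n) - sum ?g (?S2 n)) \<longlonglongrightarrow> 0"
    unfolding tendsto_Zfun_iff diff_0_right
    by (simp only: sum_diff finite_S1 S2_le_S1)
  with 1 have "(\<lambda>n. sum ?g (?S2 n)) \<longlonglongrightarrow> ((\<Sum>k. a k) o\<^sub>L (\<Sum>k. b k))"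
    by (rule Lim_transform2)
  then show ?thesis
    by (simp only: sums_def sum.triangle_reindex)
qed

definition sqc :: "nat \<Rightarrow> real" where "sqc n = (-1)^n * ((1/2::real) gchoose n)"

lemma gch_half_bound: "\<bar>(1/2::real) gchoose n\<bar> \<le> 1"
proof (induction n)
  case 0 then show ?case by simp
next
  case (Suc n)
  have "real (Suc n) * ((1/2::real) gchoose (Suc n)) = (1/2 - real n) * ((1/2::real) gchoose n)"
    using gbinomial_mult_1[of "1/2::real" n] by (simp add: algebra_simps)
  then have "real (Suc n) * \<bar>(1/2::real) gchoose (Suc n)\<bar> = \<bar>1/2 - real n\<bar> * \<bar>(1/2::real) gchoose n\<bar>"
    by (metis abs_mult abs_of_nat)
  also have "\<dots> \<le> real (Suc n) * 1"
    using Suc.IH by (intro mult_mono) auto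
  finally show ?case by (simp del: of_nat_Suc)
qed

lemma sqc_bound: "\<bar>sqc n\<bar> \<le> 1"
  using gch_half_bound[of n] by (simp add: sqc_def abs_mult)

lemma sqc_conv: "(\<Sum>i\<le>k. sqc i * sqc (k - i)) = (if k = 0 then 1 else if k = 1 then -1 else 0)"
proof -
  have "(\<Sum>i\<le>k. sqc i * sqc (k - i)) = (\<Sum>i\<le>k. (-1)^k * (((1/2::real) gchoose i) * ((1/2) gchoose (k - i))))"
    by (intro sum.cong refl) (simp add: sqc_def power_add[symmetric])
  also have "\<dots> = (-1)^k * (\<Sum>i=0..k. ((1/2::real) gchoose i) * ((1/2) gchoose (k - i)))"
    by (simp add: sum_distrib_left atLeast0AtMost)
  also have "\<dots> = (-1)^k * ((1::real) gchoose k)"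
    by (subst gbinomial_Vandermonde) simp
  also have "((1::real) gchoose k) = of_nat (1 choose k)"
    using binomial_gbinomial[of 1 k, where 'a=real] by simp
  finally show ?thesis
    by (cases k) (auto simp: binomial_eq_0)
qed

primrec kpow :: "('a::real_normed_vector \<Rightarrow>\<^sub>L 'a) \<Rightarrow> nat \<Rightarrow> ('a \<Rightarrow>\<^sub>L 'a)" where
  "kpow K 0 = id_blinfun"
| "kpow K (Suc n) = K o\<^sub>L kpow K n"

lemma kpow_add: "kpow K (m + n) = kpow K m o\<^sub>L kpow K n"
  by (induction m) (simp_all add: bl_comp_assoc)

lemma kpow_Suc': "kpow K (Suc n) = kpow K n o\<^sub>L K"
  using kpow_add[of K n 1] by simp

lemma norm_kpow: "norm (kpow K n) \<le> norm K ^ n"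
proof (induction n)
  case 0 then show ?case by (simp add: norm_blinfun_id_le)
next
  case (Suc n)
  have "norm (kpow K (Suc n)) \<le> norm K * norm (kpow K n)" by (simp add: norm_blinfun_compose)
  also have "\<dots> \<le> norm K * norm K ^ n" using Suc.IH by (intro mult_left_mono) auto
  finally show ?case by simp
qed

lemma kpow_comm: "J o\<^sub>L K = K o\<^sub>L J \<Longrightarrow> J o\<^sub>L kpow K n = kpow K n o\<^sub>L J"
proof (induction n)
  case 0 then show ?case by simp
next
  case (Suc n)
  have "J o\<^sub>L kpow K (Suc n) = (J o\<^sub>L K) o\<^sub>L kpow K n" by (simp add: bl_comp_assoc)
  also have "\<dots> = K o\<^sub>L (J o\<^sub>L kpow K n)" using Suc.prems by (simp add: bl_comp_assoc)
  also have "\<dots> = kpow K (Suc n) o\<^sub>L J" using Suc by (simp add: bl_comp_assoc)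
  finally show ?case .
qed

lemma kpow_sym:
  fixes K :: "'a::real_inner \<Rightarrow>\<^sub>L 'a"
  assumes "\<And>x y. K x \<bullet> y = x \<bullet> K y"
  shows "kpow K n x \<bullet> y = x \<bullet> kpow K n y"
proof (induction n arbitrary: x y)
  case 0 then show ?case by simp
next
  case (Suc n)
  have eq: "kpow K n (K y) = kpow K (Suc n) y"
    by (metis blinfun_apply_blinfun_compose kpow_Suc')
  have "kpow K (Suc n) x \<bullet> y = kpow K n x \<bullet> K y" by (simp add: assms)
  also have "\<dots> = x \<bullet> kpow K n (K y)" using Suc.IH by simp
  finally show ?case by (simp only: eq)
qed

lemma kpow_tendsto0:
  fixes K :: "'a::real_normed_vector \<Rightarrow>\<^sub>L 'a"
  assumes "norm K < 1"
  shows "kpow K \<longlonglongrightarrow> 0"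
proof -
  have "(\<lambda>n. norm K ^ n) \<longlonglongrightarrow> 0" using assms by (intro LIMSEQ_power_zero) auto
  then show ?thesis
    by (rule Lim_null_comparison[rotated]) (simp add: norm_kpow)
qed

lemma summable_norm_kpow:
  fixes K :: "'a::real_normed_vector \<Rightarrow>\<^sub>L 'a"
  assumes "norm K < 1" "\<And>n. \<bar>c n\<bar> \<le> 1"
  shows "summable (\<lambda>n. norm (c n *\<^sub>R kpow K n))"
proof (rule summable_comparison_test[of _ "\<lambda>n. norm K ^ n"])
  show "summable (\<lambda>n. norm K ^ n)" using assms by (intro summable_geometric) auto
  show "\<exists>N. \<forall>n\<ge>N. norm (norm (c n *\<^sub>R kpow K n)) \<le> norm K ^ n"
  proof (intro exI allI impI)
    fix n
    have "norm (c n *\<^sub>R kpow K n) = \<bar>c n\<bar> * norm (kpow K n)" by simp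
    also have "\<dots> \<le> 1 * norm K ^ n" using assms(2)[of n] norm_kpow[of K n]
      by (intro mult_mono) auto
    finally show "norm (norm (c n *\<^sub>R kpow K n)) \<le> norm K ^ n" by simp
  qed
qed

lemma op_sqrt:
  fixes K :: "'a::{real_inner,complete_space} \<Rightarrow>\<^sub>L 'a"
  assumes sym: "\<And>x y. K x \<bullet> y = x \<bullet> K y" and nK: "norm K < 1"
  shows "\<exists>R Ri. R o\<^sub>L R = id_blinfun - K \<and> (\<forall>x y. R x \<bullet> y = x \<bullet> R y)
     \<and> R o\<^sub>L Ri = id_blinfun \<and> Ri o\<^sub>L R = id_blinfun
     \<and> (\<forall>J. J o\<^sub>L K = K o\<^sub>L J \<longrightarrow> J o\<^sub>L R = R o\<^sub>L J)"
proof -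
  interpret bb: bounded_bilinear "(o\<^sub>L) :: ('a \<Rightarrow>\<^sub>L 'a) \<Rightarrow> _ \<Rightarrow> _"
    by (rule bounded_bilinear_blinfun_compose)
  define a where "a n = sqc n *\<^sub>R kpow K n" for n
  have sna: "summable (\<lambda>n. norm (a n))" unfolding a_def
    using nK sqc_bound by (rule summable_norm_kpow)
  have sa: "summable a" using summable_norm_cancel_blinfun[OF sna] by simp
  define R where "R = suminf a"
  have aR: "a sums R" using sa unfolding R_def by (rule summable_sums)
  have "(\<lambda>k. \<Sum>i\<le>k. a i o\<^sub>L a (k - i)) sums (R o\<^sub>L R)"
    using compose_Cauchy_product_sums[OF sna sna] unfolding R_def .
  moreover have "(\<Sum>i\<le>k. a i o\<^sub>L a (k - i)) = (if k = 0 then 1 else if k = 1 then -1 else 0) *\<^sub>R kpow K k" for k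
  proof -
    have "(\<Sum>i\<le>k. a i o\<^sub>L a (k - i)) = (\<Sum>i\<le>k. (sqc i * sqc (k - i)) *\<^sub>R kpow K k)"
    proof (intro sum.cong refl)
      fix i assume "i \<in> {..k}"
      then have "kpow K i o\<^sub>L kpow K (k - i) = kpow K k" using kpow_add[of K i "k - i"] by simp
      then show "a i o\<^sub>L a (k - i) = (sqc i * sqc (k - i)) *\<^sub>R kpow K k"
        by (simp add: a_def bb.scaleR_left bb.scaleR_right)
    qed
    also have "\<dots> = (\<Sum>i\<le>k. sqc i * sqc (k - i)) *\<^sub>R kpow K k" by (simp add: scaleR_sum_left)
    finally show ?thesis by (simp add: sqc_conv)
  qed
  ultimately have "(\<lambda>k. (if k = 0 then 1 else if k = 1 then -1 else 0) *\<^sub>R kpow K k) sums (R o\<^sub>L R)"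
    by simp
  moreover have "(\<lambda>k. (if k = 0 then 1 else if k = 1 then -1 else 0) *\<^sub>R kpow K k) sums (id_blinfun - K)"
  proof -
    have "(\<lambda>k. (if k = 0 then 1 else if k = 1 then -1 else 0) *\<^sub>R kpow K k) sums
          (\<Sum>k\<in>{0,1}. (if k = 0 then 1 else if k = 1 then -1 else 0) *\<^sub>R kpow K k)"
      by (rule sums_finite) auto
    then show ?thesis by simp
  qed
  ultimately have sq: "R o\<^sub>L R = id_blinfun - K" using sums_unique2 by blast
  have symR: "R x \<bullet> y = x \<bullet> R y" for x y
  proof -
    have "(\<lambda>n. a n x \<bullet> y) sums (R x \<bullet> y)"
      using bounded_linear.sums[OF bounded_linear_inner_left bounded_linear.sums[OF blinfun.bounded_linear_left aR]] .
    moreover have "(\<lambda>n. x \<bullet> a n y) sums (x \<bullet> R y)"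
      using bounded_linear.sums[OF bounded_linear_inner_right bounded_linear.sums[OF blinfun.bounded_linear_left aR]] .
    moreover have "a n x \<bullet> y = x \<bullet> a n y" for n
      by (simp add: a_def kpow_sym[OF sym] inner_scaleR_left inner_scaleR_right blinfun.scaleR_left)
    ultimately show ?thesis using sums_unique2 by simp
  qed
  have commR: "J o\<^sub>L R = R o\<^sub>L J" if "J o\<^sub>L K = K o\<^sub>L J" for J
  proof -
    have "(\<lambda>n. J o\<^sub>L a n) sums (J o\<^sub>L R)" by (rule bounded_linear.sums[OF bb.bounded_linear_right aR])
    moreover have "(\<lambda>n. a n o\<^sub>L J) sums (R o\<^sub>L J)" by (rule bounded_linear.sums[OF bb.bounded_linear_left aR])
    moreover have "J o\<^sub>L a n = a n o\<^sub>L J" for n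
      using kpow_comm[OF that, of n] by (simp add: a_def bb.scaleR_left bb.scaleR_right)
    ultimately show ?thesis using sums_unique2 by simp
  qed
  have snk: "summable (\<lambda>n. norm (1 *\<^sub>R kpow K n))" using nK by (rule summable_norm_kpow) simp
  then have "summable (kpow K)" using summable_norm_cancel_blinfun by simp
  define N where "N = suminf (kpow K)"
  have kN: "kpow K sums N" unfolding N_def using \<open>summable (kpow K)\<close> by (rule summable_sums)
  have tel: "(\<lambda>n. kpow K n - kpow K (Suc n)) sums (id_blinfun - 0)"
    using telescope_sums'[OF kpow_tendsto0[OF nK]] by simp
  have N1: "(id_blinfun - K) o\<^sub>L N = id_blinfun"
  proof -
    have "(\<lambda>n. (id_blinfun - K) o\<^sub>L kpow K n) sums ((id_blinfun - K) o\<^sub>L N)"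
      by (rule bounded_linear.sums[OF bb.bounded_linear_right kN])
    moreover have "(id_blinfun - K) o\<^sub>L kpow K n = kpow K n - kpow K (Suc n)" for n
      by (simp add: bb.diff_left)
    ultimately show ?thesis using tel sums_unique2 by fastforce
  qed
  have N2: "N o\<^sub>L (id_blinfun - K) = id_blinfun"
  proof -
    have "(\<lambda>n. kpow K n o\<^sub>L (id_blinfun - K)) sums (N o\<^sub>L (id_blinfun - K))"
      by (rule bounded_linear.sums[OF bb.bounded_linear_left kN])
    moreover have "kpow K n o\<^sub>L (id_blinfun - K) = kpow K n - kpow K (Suc n)" for n
      by (simp add: bb.diff_right kpow_Suc'[symmetric] del: kpow.simps(2))
    ultimately show ?thesis using tel sums_unique2 by fastforce
  qed
  define Ri where "Ri = R o\<^sub>L N"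
  have r1: "R o\<^sub>L Ri = id_blinfun"
    unfolding Ri_def by (simp add: bl_comp_assoc[symmetric] sq N1)
  have l1: "(N o\<^sub>L R) o\<^sub>L R = id_blinfun"
    by (simp add: bl_comp_assoc sq N2)
  have "Ri = ((N o\<^sub>L R) o\<^sub>L R) o\<^sub>L Ri" using l1 by simp
  also have "\<dots> = (N o\<^sub>L R) o\<^sub>L (R o\<^sub>L Ri)" by (simp only: bl_comp_assoc)
  also have "\<dots> = N o\<^sub>L R" using r1 by simp
  finally have "Ri o\<^sub>L R = id_blinfun" using l1 by simp
  then show ?thesis using sq symR r1 commR by blast
qed

lemma banach_steinhaus_seq:
  fixes A :: "nat \<Rightarrow> ('a::{real_normed_vector,complete_space} \<Rightarrow>\<^sub>L 'b::real_normed_vector)"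
  assumes "\<And>h. \<exists>B. \<forall>n. norm (A n h) \<le> B"
  shows "\<exists>C. \<forall>n. norm (A n) \<le> C"
proof -
  define F where "F k = {h. \<forall>n. norm (A n h) \<le> real k}" for k :: nat
  have clo: "closed (F k)" for k
  proof -
    have "F k = (\<Inter>n. {h. norm (A n h) \<le> real k})" by (auto simp: F_def)
    moreover have "closed {h. norm (A n h) \<le> real k}" for n
      by (intro closed_Collect_le continuous_intros)
    ultimately show ?thesis by auto
  qed
  have un: "(\<Union>k. F k) = UNIV"
  proof (rule set_eqI, rule iffI)
    fix h :: 'a assume "h \<in> UNIV"
    obtain B where "\<forall>n. norm (A n h) \<le> B" using assms by blast
    moreover obtain k :: nat where "B \<le> real k" using real_arch_simple by blast
    ultimately have "h \<in> F k" by (auto simp: F_def intro: order_trans)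
    then show "h \<in> (\<Union>k. F k)" by blast
  qed simp
  have "\<exists>k. interior (F k) \<noteq> {}"
  proof (rule ccontr)
    assume "\<not> ?thesis"
    then have "euclidean interior_of \<Union>(range F) = {}"
      by (intro Baire_category_alt) (auto simp: completely_metrizable_space_euclidean clo euclidean_interior_of)
    then show False using un by (simp add: euclidean_interior_of)
  qed
  then obtain k x0 where "x0 \<in> interior (F k)" by blast
  then obtain r where r0: "r > 0" "ball x0 r \<subseteq> interior (F k)"
    using open_contains_ball open_interior by blast
  then have r: "r > 0" "ball x0 r \<subseteq> F k" using interior_subset by blast+
  have bnd: "norm (A n h) \<le> 2 * real k" if "norm h < r" for n and h :: 'a
  proof -
    have "x0 + h \<in> F k" using r that by (auto simp: dist_norm)
    moreover have "x0 \<in> F k" using r by auto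
    ultimately have "norm (A n (x0 + h)) \<le> real k" "norm (A n x0) \<le> real k"
      by (auto simp: F_def)
    moreover have "A n h = A n (x0 + h) - A n x0" by (simp add: blinfun.add_right)
    ultimately show ?thesis using norm_triangle_ineq4[of "A n (x0 + h)" "A n x0"] by simp
  qed
  have "norm (A n) \<le> 4 * real k / r" for n
  proof (rule norm_blinfun_bound)
    show "0 \<le> 4 * real k / r" using r by simp
    fix h
    show "norm (A n h) \<le> 4 * real k / r * norm h"
    proof (cases "h = 0")
      case True then show ?thesis by simp
    next
      case False
      define s where "s = r / (2 * norm h)"
      have s: "s > 0" using r False by (simp add: s_def)
      have "norm (s *\<^sub>R h) < r" using r False by (simp add: s_def)
      then have "norm (A n (s *\<^sub>R h)) \<le> 2 * real k" by (rule bnd)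
      then have "s * norm (A n h) \<le> 2 * real k" using s by (simp add: blinfun.scaleR_right)
      then have "norm (A n h) \<le> 2 * real k / s" using s by (simp add: field_simps)
      also have "2 * real k / s = 4 * real k / r * norm h" using r False by (simp add: s_def field_simps)
      finally show ?thesis .
    qed
  qed
  then show ?thesis by blast
qed

lemma C0D:
  assumes "C0_semigroup T"
  shows "T 0 = id_blinfun" "\<And>s t. 0 \<le> s \<Longrightarrow> 0 \<le> t \<Longrightarrow> T (s + t) = T s o\<^sub>L T t"
    "\<And>x. ((\<lambda>t. blinfun_apply (T t) x) \<longlongrightarrow> x) (at_right 0)"
  using assms unfolding C0_semigroup_def by auto

lemma C0_right:
  assumes "C0_semigroup T" "e > 0"
  shows "\<exists>d>0. \<forall>s. 0 \<le> s \<and> s < d \<longrightarrow> norm (T s x - x) < e"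
proof -
  have "eventually (\<lambda>t. dist (T t x) x < e) (at_right 0)"
    using C0D(3)[OF assms(1), of x] assms(2) by (rule tendstoD)
  then obtain b where b: "b > 0" "\<And>y. y > 0 \<Longrightarrow> y < b \<Longrightarrow> dist (T y x) x < e"
    unfolding eventually_at_right_field by auto
  show ?thesis
  proof (intro exI[of _ b] conjI allI impI)
    fix s assume s: "0 \<le> s \<and> s < b"
    show "norm (T s x - x) < e"
    proof (cases "s = 0")
      case True then show ?thesis using C0D(1)[OF assms(1)] assms(2) by simp
    next
      case False then show ?thesis using b(2)[of s] s by (simp add: dist_norm)
    qed
  qed (rule b(1))
qed

lemma C0_local_bound:
  fixes T :: "real \<Rightarrow> ('a::{real_normed_vector,complete_space} \<Rightarrow>\<^sub>L 'a)"
  assumes "C0_semigroup T"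
  shows "\<exists>d>0. \<exists>M. \<forall>t. 0 \<le> t \<and> t \<le> d \<longrightarrow> norm (T t) \<le> M"
proof (rule ccontr)
  assume nt: "\<not> ?thesis"
  have "\<exists>t. 0 \<le> t \<and> t \<le> 1 / (real n + 1) \<and> norm (T t) > real n" for n :: nat
  proof -
    have "1 / (real n + 1) > 0" by simp
    then have "\<not> (\<forall>t. 0 \<le> t \<and> t \<le> 1 / (real n + 1) \<longrightarrow> norm (T t) \<le> real n)"
      using nt by blast
    then show ?thesis by (auto simp: not_le)
  qed
  then obtain t where t: "\<And>n. 0 \<le> t n" "\<And>n. t n \<le> 1 / (real n + 1)" "\<And>n. norm (T (t n)) > real n"
    by metis
  have "\<exists>B. \<forall>n. norm (T (t n) h) \<le> B" for h
  proof -
    have "(\<lambda>n. T (t n) h) \<longlonglongrightarrow> h"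
    proof (rule LIMSEQ_I)
      fix r :: real assume "r > 0"
      then obtain d where d: "d > 0" "\<And>s. 0 \<le> s \<and> s < d \<Longrightarrow> norm (T s h - h) < r"
        using C0_right[OF assms] by blast
      obtain N :: nat where N: "1 / d < real N" using reals_Archimedean2 by blast
      show "\<exists>no. \<forall>n\<ge>no. norm (T (t n) h - h) < r"
      proof (intro exI allI impI)
        fix n assume "N \<le> n"
        then have "1 / d < real n + 1" using N by linarith
        then have "1 / (real n + 1) < d" using d(1)
          by (simp add: divide_less_eq field_simps)
        then have "t n < d" using t(2)[of n] by linarith
        then show "norm (T (t n) h - h) < r" using d(2) t(1) by blast
      qed
    qed
    then have "Bseq (\<lambda>n. T (t n) h)" by (intro convergent_imp_Bseq convergentI)
    then show ?thesis unfolding Bseq_def by blast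
  qed
  then obtain C where C: "\<And>n. norm (T (t n)) \<le> C"
    using banach_steinhaus_seq[of "\<lambda>n. T (t n)"] by blast
  obtain n :: nat where "C < real n" using reals_Archimedean2 by blast
  then show False using t(3)[of n] C[of n] by linarith
qed

lemma C0_bound:
  fixes T :: "real \<Rightarrow> ('a::{real_normed_vector,complete_space} \<Rightarrow>\<^sub>L 'a)"
  assumes "C0_semigroup T"
  shows "\<exists>M\<ge>1. \<forall>t. 0 \<le> t \<and> t \<le> b \<longrightarrow> norm (T t) \<le> M"
proof -
  obtain d M0 where d: "d > 0" "\<And>t. 0 \<le> t \<and> t \<le> d \<Longrightarrow> norm (T t) \<le> M0"
    using C0_local_bound[OF assms] by blast
  define M1 where "M1 = max M0 1"
  have M1: "M1 \<ge> 1" "\<And>t. 0 \<le> t \<and> t \<le> d \<Longrightarrow> norm (T t) \<le> M1"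
    using d(2) by (auto simp: M1_def intro: max.coboundedI1)
  have ind: "\<forall>t. 0 \<le> t \<and> t \<le> real n * d \<longrightarrow> norm (T t) \<le> M1 ^ n" for n
  proof (induction n)
    case 0
    show ?case using C0D(1)[OF assms] by (auto simp: norm_blinfun_id_le)
  next
    case (Suc n)
    show ?case
    proof (intro allI impI)
      fix t assume tt: "0 \<le> t \<and> t \<le> real (Suc n) * d"
      show "norm (T t) \<le> M1 ^ Suc n"
      proof (cases "t \<le> d")
        case True
        then have "norm (T t) \<le> M1" using M1(2) tt by blast
        also have "M1 \<le> M1 ^ Suc n" using M1(1) by (simp add: power_increasing[of 1 "Suc n" M1, simplified])
        finally show ?thesis .
      next
        case False
        then have "T t = T d o\<^sub>L T (t - d)" using C0D(2)[OF assms, of d "t - d"] d(1) by simp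
        then have "norm (T t) \<le> norm (T d) * norm (T (t - d))" by (simp add: norm_blinfun_compose)
        also have "\<dots> \<le> M1 * M1 ^ n"
        proof (rule mult_mono)
          show "norm (T d) \<le> M1" using M1(2) d(1) by simp
          show "norm (T (t - d)) \<le> M1 ^ n" using Suc.IH False tt by (auto simp: algebra_simps)
        qed (use M1(1) in auto)
        finally show ?thesis by simp
      qed
    qed
  qed
  obtain n :: nat where "b / d < real n" using reals_Archimedean2 by blast
  then have "b \<le> real n * d" using d(1) by (simp add: field_simps)
  then show ?thesis using ind[of n] M1(1) by (intro exI[of _ "M1 ^ n"]) (auto intro: one_le_power)
qed

lemma C0_cont:
  fixes T :: "real \<Rightarrow> ('a::{real_normed_vector,complete_space} \<Rightarrow>\<^sub>L 'a)"
  assumes "C0_semigroup T"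
  shows "continuous_on {0..} (\<lambda>t. T t x)"
proof -
  have "\<exists>d>0. \<forall>u\<in>{0..}. dist u t < d \<longrightarrow> dist (T u x) (T t x) < e" if t: "t \<ge> 0" and e: "e > 0" for t e
  proof -
    obtain M where M: "M \<ge> 1" "\<And>s. 0 \<le> s \<and> s \<le> t + 1 \<Longrightarrow> norm (T s) \<le> M"
      using C0_bound[OF assms, of "t + 1"] by blast
    obtain d where d: "d > 0" "\<And>s. 0 \<le> s \<and> s < d \<Longrightarrow> norm (T s x - x) < e / M"
      using C0_right[OF assms, of "e / M"] e M(1) by auto
    show ?thesis
    proof (intro exI[of _ "min d 1"] conjI ballI impI)
      show "min d 1 > 0" using d(1) by simp
      fix u :: real assume u: "u \<in> {0..}" "dist u t < min d 1"
      show "dist (T u x) (T t x) < e"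
      proof (cases "t \<le> u")
        case True
        have "T u = T t o\<^sub>L T (u - t)" using C0D(2)[OF assms, of t "u - t"] t True by simp
        then have "T u x - T t x = T t (T (u - t) x - x)" by (simp add: blinfun.diff_right)
        then have "norm (T u x - T t x) \<le> norm (T t) * norm (T (u - t) x - x)"
          by (simp add: norm_blinfun)
        also have "\<dots> \<le> M * norm (T (u - t) x - x)"
          using M(2)[of t] t by (intro mult_right_mono) auto
        also have "\<dots> < M * (e / M)"
          using d(2)[of "u - t"] True u M(1) by (intro mult_strict_left_mono) (auto simp: dist_real_def)
        finally show ?thesis using M(1) by (simp add: dist_norm)
      next
        case False
        have "T t = T u o\<^sub>L T (t - u)" using C0D(2)[OF assms, of u "t - u"] u False by simp
        then have "T t x - T u x = T u (T (t - u) x - x)" by (simp add: blinfun.diff_right)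
        then have "norm (T t x - T u x) \<le> norm (T u) * norm (T (t - u) x - x)"
          by (simp add: norm_blinfun)
        also have "\<dots> \<le> M * norm (T (t - u) x - x)"
          using M(2)[of u] u False by (intro mult_right_mono) auto
        also have "\<dots> < M * (e / M)"
          using d(2)[of "t - u"] False u M(1) by (intro mult_strict_left_mono) (auto simp: dist_real_def)
        finally show ?thesis using M(1) by (simp add: dist_norm norm_minus_commute)
      qed
    qed
  qed
  then show ?thesis unfolding continuous_on_iff by auto
qed

lemma C0_below:
  fixes T :: "real \<Rightarrow> ('a::{real_normed_vector,complete_space} \<Rightarrow>\<^sub>L 'a)"
  assumes "C0_semigroup T" "t' > 0" "bounded_below (T t')"
  shows "\<exists>c>0. \<forall>t h. 0 \<le> t \<and> t \<le> b \<longrightarrow> c * norm h \<le> norm (T t h)"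
proof -
  obtain c0 where c0: "c0 > 0" "\<And>h. c0 * norm h \<le> norm (T t' h)"
    using assms(3) unfolding bounded_below_def by blast
  have ind: "c0 ^ n * norm h \<le> norm (T (real n * t') h)" for n h
  proof (induction n arbitrary: h)
    case 0 then show ?case using C0D(1)[OF assms(1)] by simp
  next
    case (Suc n)
    have "T (real (Suc n) * t') = T t' o\<^sub>L T (real n * t')"
      using C0D(2)[OF assms(1), of t' "real n * t'"] assms(2) by (simp add: algebra_simps)
    then have "norm (T (real (Suc n) * t') h) = norm (T t' (T (real n * t') h))" by simp
    also have "\<dots> \<ge> c0 * norm (T (real n * t') h)" by (rule c0(2))
    finally have "c0 * norm (T (real n * t') h) \<le> norm (T (real (Suc n) * t') h)" .
    moreover have "c0 * (c0 ^ n * norm h) \<le> c0 * norm (T (real n * t') h)"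
      using Suc.IH c0(1) by (intro mult_left_mono) auto
    ultimately show ?case by (simp add: mult.assoc)
  qed
  obtain n :: nat where n: "b / t' < real n" using reals_Archimedean2 by blast
  then have bn: "b \<le> real n * t'" using assms(2) by (simp add: field_simps)
  obtain M where M: "M \<ge> 1" "\<And>s. 0 \<le> s \<and> s \<le> real n * t' \<Longrightarrow> norm (T s) \<le> M"
    using C0_bound[OF assms(1), of "real n * t'"] by blast
  show ?thesis
  proof (intro exI[of _ "c0 ^ n / M"] conjI allI impI)
    show "c0 ^ n / M > 0" using c0(1) M(1) by simp
    fix t h assume t: "0 \<le> t \<and> t \<le> b"
    have "T (real n * t') = T (real n * t' - t) o\<^sub>L T t"
      using C0D(2)[OF assms(1), of "real n * t' - t" t] t bn by simp
    then have "norm (T (real n * t') h) \<le> norm (T (real n * t' - t)) * norm (T t h)"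
      by (simp add: norm_blinfun)
    also have "\<dots> \<le> M * norm (T t h)"
      using M(2)[of "real n * t' - t"] t bn by (intro mult_right_mono) auto
    finally have "c0 ^ n * norm h \<le> M * norm (T t h)" using ind[of n h] by linarith
    then show "c0 ^ n / M * norm h \<le> norm (T t h)" using M(1) by (simp add: field_simps)
  qed
qed

lemma quad_nonneg_imp_zero:
  fixes a b :: real
  assumes "b \<ge> 0" "\<And>s. 2 * s * a + s^2 * b \<ge> 0"
  shows "a = 0"
proof -
  define t where "t = 1 / (b + 1)"
  have t: "t > 0" "t * b < 1" using assms(1) by (auto simp: t_def field_simps)
  have "2 * (- t * a) * a + (- t * a)^2 * b \<ge> 0" using assms(2) .
  moreover have "2 * (- t * a) * a + (- t * a)^2 * b = a^2 * (t * (t * b - 2))"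
    by (simp add: algebra_simps power2_eq_square)
  moreover have "t * (t * b - 2) < 0" using t by (simp add: mult_pos_neg)
  ultimately have "0 \<le> a^2 * (t * (t * b - 2))" by simp
  then show ?thesis using t by (auto simp: zero_le_mult_iff)
qed

lemma riesz_repr:
  fixes f :: "'a::{real_inner,complete_space} \<Rightarrow> real"
  assumes f: "bounded_linear f"
  shows "\<exists>y. \<forall>x. f x = x \<bullet> y"
proof -
  interpret f: bounded_linear f by fact
  obtain B where B: "B > 0" "\<And>x. norm (f x) \<le> norm x * B" using f.pos_bounded by blast
  define \<Phi> where "\<Phi> x = x \<bullet> x - 2 * f x" for x
  have lowb: "\<Phi> x \<ge> - (B^2)" for x
  proof -
    have "f x \<le> norm x * B" using B(2)[of x] by simp
    moreover have "x \<bullet> x = (norm x)^2" by (simp add: power2_norm_eq_inner)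
    moreover have "(norm x)^2 - 2 * (norm x * B) \<ge> -(B^2)"
      using sum_power2_ge_zero[of "norm x - B" 0] by (simp add: power2_eq_square algebra_simps)
    ultimately show ?thesis unfolding \<Phi>_def by linarith
  qed
  define m where "m = Inf (range \<Phi>)"
  have bdd: "bdd_below (range \<Phi>)" using lowb by (intro bdd_belowI[of _ "-(B^2)"]) auto
  have m_le: "m \<le> \<Phi> x" for x unfolding m_def using bdd by (simp add: cInf_lower)
  have "\<exists>x. \<Phi> x < m + 1 / (real n + 1)" for n
  proof -
    have "Inf (range \<Phi>) < m + 1 / (real n + 1)" unfolding m_def by simp
    then show ?thesis using cInf_lessD[of "range \<Phi>"] by auto
  qed
  then obtain x where x: "\<And>n. \<Phi> (x n) < m + 1 / (real n + 1)" by metis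
  have para: "(u - v) \<bullet> (u - v) = 2 * \<Phi> u + 2 * \<Phi> v - 4 * \<Phi> ((1/2) *\<^sub>R (u + v))" for u v
    unfolding \<Phi>_def by (simp add: f.add f.scale inner_simps algebra_simps)
  have dist_bound: "(dist (x n) (x k))^2 \<le> 2 / (real n + 1) + 2 / (real k + 1)" for n k
  proof -
    have "(dist (x n) (x k))^2 = (x n - x k) \<bullet> (x n - x k)"
      by (simp add: dist_norm power2_norm_eq_inner)
    also have "\<dots> = 2 * \<Phi> (x n) + 2 * \<Phi> (x k) - 4 * \<Phi> ((1/2) *\<^sub>R (x n + x k))" by (rule para)
    also have "\<dots> \<le> 2 * (m + 1 / (real n + 1)) + 2 * (m + 1 / (real k + 1)) - 4 * m"
      using x[of n] x[of k] m_le[of "(1/2) *\<^sub>R (x n + x k)"] by argo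
    finally show ?thesis by simp
  qed
  have "Cauchy x"
  proof (rule metric_CauchyI)
    fix e :: real assume e: "e > 0"
    obtain N :: nat where N: "4 / e^2 < real N" using reals_Archimedean2 by blast
    have "N > 0" using N e by (auto intro: ccontr)
    show "\<exists>M. \<forall>m\<ge>M. \<forall>n\<ge>M. dist (x m) (x n) < e"
    proof (intro exI allI impI)
      fix a b assume ab: "N \<le> a" "N \<le> b"
      have "2 / (real a + 1) \<le> 2 / (real N + 1)" "2 / (real b + 1) \<le> 2 / (real N + 1)"
        using ab by (auto intro!: divide_left_mono)
      then have "(dist (x a) (x b))^2 \<le> 4 / (real N + 1)" using dist_bound[of a b] by linarith
      also have "\<dots> < e^2"
      proof -
        have "4 / e^2 < real N + 1" using N by linarith
        then show ?thesis using e by (simp add: field_simps)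
      qed
      finally have "(dist (x a) (x b))^2 < e^2" .
      then show "dist (x a) (x b) < e" using e by (simp add: power_less_imp_less_base)
    qed
  qed
  then obtain y where y: "x \<longlonglongrightarrow> y" using complete_UNIV convergent_def Cauchy_convergent_iff by blast
  have "(\<lambda>n. \<Phi> (x n)) \<longlonglongrightarrow> \<Phi> y"
    unfolding \<Phi>_def by (intro tendsto_intros y f.tendsto)
  moreover have "(\<lambda>n. \<Phi> (x n)) \<longlonglongrightarrow> m"
  proof (rule tendsto_sandwich[of "\<lambda>n. m" _ _ "\<lambda>n. m + 1 / (real n + 1)"])
    show "\<forall>\<^sub>F n in sequentially. m \<le> \<Phi> (x n)" using m_le by simp
    show "\<forall>\<^sub>F n in sequentially. \<Phi> (x n) \<le> m + 1 / (real n + 1)" using x by (simp add: less_imp_le)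
    show "(\<lambda>n. m) \<longlonglongrightarrow> m" by simp
    show "(\<lambda>n. m + 1 / (real n + 1)) \<longlonglongrightarrow> m"
      using tendsto_add[OF tendsto_const[of m] LIMSEQ_inverse_real_of_nat] by (simp add: inverse_eq_divide add.commute)
  qed
  ultimately have ym: "\<Phi> y = m" using LIMSEQ_unique by blast
  have "f v = v \<bullet> y" for v
  proof -
    have "2 * s * (y \<bullet> v - f v) + s^2 * (v \<bullet> v) \<ge> 0" for s
    proof -
      have "\<Phi> (y + s *\<^sub>R v) - \<Phi> y = 2 * s * (y \<bullet> v - f v) + s^2 * (v \<bullet> v)"
        unfolding \<Phi>_def by (simp add: f.add f.scale inner_simps algebra_simps power2_eq_square inner_commute)
      moreover have "\<Phi> (y + s *\<^sub>R v) \<ge> \<Phi> y" using ym m_le by simp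
      ultimately show ?thesis by linarith
    qed
    then have "y \<bullet> v - f v = 0" by (intro quad_nonneg_imp_zero[of "v \<bullet> v"]) auto
    then show ?thesis by (simp add: inner_commute)
  qed
  then show ?thesis by blast
qed

lemma quad_disc:
  fixes A B C :: real
  assumes "C \<ge> 0" "\<And>s. A + 2 * s * B + s^2 * C \<ge> 0"
  shows "B^2 \<le> A * C"
proof (cases "C = 0")
  case True
  have "B = 0"
  proof (rule ccontr)
    assume "B \<noteq> 0"
    have "A + 2 * (- (\<bar>A\<bar> + 1) / (2 * B)) * B + (- (\<bar>A\<bar> + 1) / (2 * B))^2 * C \<ge> 0" by (rule assms(2))
    moreover have "A + 2 * (- (\<bar>A\<bar> + 1) / (2 * B)) * B + (- (\<bar>A\<bar> + 1) / (2 * B))^2 * C = A - \<bar>A\<bar> - 1"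
      using True \<open>B \<noteq> 0\<close> by (simp add: field_simps)
    ultimately show False by linarith
  qed
  then show ?thesis using True by simp
next
  case False
  then have C: "C > 0" using assms(1) by simp
  have "A + 2 * (- B / C) * B + (- B / C)^2 * C \<ge> 0" by (rule assms(2))
  moreover have "A + 2 * (- B / C) * B + (- B / C)^2 * C = A - B^2 / C"
    using C by (simp add: field_simps power2_eq_square)
  ultimately have "B^2 / C \<le> A" by linarith
  then show ?thesis using C by (simp add: field_simps)
qed

lemma pos_sym_norm_le:
  fixes K :: "'a::real_inner \<Rightarrow>\<^sub>L 'a"
  assumes sym: "\<And>x y. K x \<bullet> y = x \<bullet> K y"
    and pos: "\<And>x. 0 \<le> K x \<bullet> x" and up: "\<And>x. K x \<bullet> x \<le> a * (x \<bullet> x)" and a: "a \<ge> 0"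
  shows "norm K \<le> a"
proof (rule norm_blinfun_bound[OF a])
  fix x
  have cs: "(K x \<bullet> y)^2 \<le> (K x \<bullet> x) * (K y \<bullet> y)" for y
  proof (rule quad_disc)
    show "0 \<le> K y \<bullet> y" by (rule pos)
    fix s
    have "0 \<le> K (x + s *\<^sub>R y) \<bullet> (x + s *\<^sub>R y)" by (rule pos)
    also have "K (x + s *\<^sub>R y) \<bullet> (x + s *\<^sub>R y) = K x \<bullet> x + 2 * s * (K x \<bullet> y) + s^2 * (K y \<bullet> y)"
    proof -
      have "K y \<bullet> x = K x \<bullet> y" using sym[of y x] by (simp add: inner_commute)
      then show ?thesis
        by (simp add: blinfun.add_right blinfun.scaleR_right inner_add_left inner_add_right
            inner_scaleR_left inner_scaleR_right power2_eq_square algebra_simps)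
    qed
    finally show "0 \<le> K x \<bullet> x + 2 * s * (K x \<bullet> y) + s^2 * (K y \<bullet> y)" .
  qed
  have "(K x \<bullet> K x)^2 \<le> (K x \<bullet> x) * (K (K x) \<bullet> K x)" by (rule cs)
  also have "\<dots> \<le> (a * (x \<bullet> x)) * (a * (K x \<bullet> K x))"
    using up pos a by (intro mult_mono) auto
  finally have *: "(norm (K x))^2 * (norm (K x))^2 \<le> a^2 * (norm x)^2 * (norm (K x))^2"
    by (simp add: power2_norm_eq_inner[symmetric] power2_eq_square algebra_simps)
  show "norm (K x) \<le> a * norm x"
  proof (cases "K x = 0")
    case True then show ?thesis using a by simp
  next
    case False
    then have p: "(norm (K x))^2 > 0" by simp
    have "(norm (K x))^2 \<le> a^2 * (norm x)^2" using mult_right_le_imp_le[OF * p] .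
    then have "(norm (K x))^2 \<le> (a * norm x)^2" by (simp add: power_mult_distrib)
    then show ?thesis using a by (simp add: power2_le_iff_abs_le)
  qed
qed

lemma gram_op:
  fixes q :: "'a::{real_inner,complete_space} \<Rightarrow> 'a \<Rightarrow> real"
  assumes q: "bounded_bilinear q"
  shows "\<exists>G::'a \<Rightarrow>\<^sub>L 'a. \<forall>h k. G h \<bullet> k = q h k"
proof -
  interpret q: bounded_bilinear q by fact
  have "\<exists>y. \<forall>k. q h k = k \<bullet> y" for h
    by (rule riesz_repr[OF q.bounded_linear_right])
  then obtain g where g: "\<And>h k. q h k = k \<bullet> g h" by metis
  have uniq: "u = v" if "\<And>k. k \<bullet> u = k \<bullet> v" for u v :: 'a
  proof -
    have "(u - v) \<bullet> (u - v) = 0" using that[of "u - v"] by (simp add: inner_diff_right)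
    then show ?thesis by simp
  qed
  have lin: "linear g"
  proof
    show "g (x + y) = g x + g y" for x y
      by (rule uniq) (simp add: g[symmetric] q.add_left inner_add_right)
    show "g (r *\<^sub>R x) = r *\<^sub>R g x" for r x
      by (rule uniq) (simp add: g[symmetric] q.scaleR_left inner_scaleR_right)
  qed
  obtain C where C: "\<And>a b. norm (q a b) \<le> norm a * norm b * C" using q.bounded by blast
  have bl: "bounded_linear g"
  proof (rule bounded_linear_intro[where K="max C 0"])
    show "g (x + y) = g x + g y" for x y using lin by (simp add: linear_add)
    show "g (r *\<^sub>R x) = r *\<^sub>R g x" for r x using lin by (simp add: linear_scale)
    fix h
    have "(norm (g h))^2 = q h (g h)" by (simp add: g power2_norm_eq_inner)
    also have "\<dots> \<le> norm h * norm (g h) * max C 0"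
      using C[of h "g h"] by (smt (verit) mult_left_mono mult_nonneg_nonneg norm_ge_zero real_norm_def abs_le_iff max.cobounded1)
    finally have "norm (g h) * norm (g h) \<le> (norm h * max C 0) * norm (g h)"
      by (simp add: power2_eq_square algebra_simps)
    then show "norm (g h) \<le> norm h * max C 0"
      by (cases "norm (g h) = 0") (auto simp: mult_le_cancel_right)
  qed
  show ?thesis
    by (rule exI[of _ "Blinfun g"]) (simp add: bounded_linear_Blinfun_apply[OF bl] g inner_commute)
qed

lemma shift_contr:
  fixes f :: "real \<Rightarrow> real"
  assumes cont: "continuous_on {0..} f" and tau: "\<tau> > 0" and s: "0 \<le> s" "s \<le> \<tau>"
    and dec: "\<And>v. 0 \<le> v \<Longrightarrow> v \<le> \<tau> \<Longrightarrow> f (v + \<tau>) \<le> f v"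
  shows "integral {0..\<tau>} (\<lambda>t. f (t + s)) \<le> integral {0..\<tau>} f"
proof -
  have int: "f integrable_on {a..b}" if "0 \<le> a" for a b
    by (rule integrable_continuous_interval, rule continuous_on_subset[OF cont]) (use that in auto)
  have sh: "integral {a..b} (\<lambda>t. f (t + c)) = integral {a + c..b + c} f" for a b c
  proof -
    have "(\<lambda>t. f (t + c)) = f \<circ> (+) c" by (auto simp: add.commute)
    then show ?thesis using integral_shift_Icc_real[of a b f c] by simp
  qed
  have "integral {0..\<tau>} (\<lambda>t. f (t + s)) = integral {s..\<tau> + s} f" using sh[of 0 \<tau> s] by simp
  also have "\<dots> = integral {s..\<tau>} f + integral {\<tau>..\<tau> + s} f"
    using Henstock_Kurzweil_Integration.integral_combine[where a=s and c=\<tau> and b="\<tau> + s" and f=f] int[of s "\<tau> + s"] s by simp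
  also have "integral {\<tau>..\<tau> + s} f = integral {0..s} (\<lambda>t. f (t + \<tau>))"
    using sh[of 0 s \<tau>] by (simp add: add.commute)
  also have "\<dots> \<le> integral {0..s} f"
  proof (rule integral_le)
    show "(\<lambda>t. f (t + \<tau>)) integrable_on {0..s}"
    proof (rule integrable_continuous_interval)
      show "continuous_on {0..s} (\<lambda>t. f (t + \<tau>))"
        by (rule continuous_on_compose2[OF cont]) (use tau in \<open>auto intro!: continuous_intros\<close>)
    qed
    show "f integrable_on {0..s}" by (rule int) simp
    show "\<And>x. x \<in> {0..s} \<Longrightarrow> f (x + \<tau>) \<le> f x" using dec s by auto
  qed
  finally have "integral {0..\<tau>} (\<lambda>t. f (t + s)) \<le> integral {0..s} f + integral {s..\<tau>} f" by simp
  also have "\<dots> = integral {0..\<tau>} f"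
    using Henstock_Kurzweil_Integration.integral_combine[where a=0 and c=s and b=\<tau> and f=f] int[of 0 \<tau>] s by simp
  finally show ?thesis .
qed

lemma J_orth:
  assumes "complex_structure J"
  shows "J x \<bullet> J y = x \<bullet> (y::'a::real_inner)"
proof -
  have n: "norm (J z) = norm z" for z using assms by (simp add: complex_structure_def)
  have nn: "J z \<bullet> J z = z \<bullet> z" for z
    using n[of z] by (metis power2_norm_eq_inner)
  have "J (x + y) \<bullet> J (x + y) = (x + y) \<bullet> (x + y)" by (rule nn)
  then have "J x \<bullet> J x + 2 * (J x \<bullet> J y) + J y \<bullet> J y = x \<bullet> x + 2 * (x \<bullet> y) + y \<bullet> y"
    by (simp add: blinfun.add_right inner_add_left inner_add_right inner_commute)
  then show ?thesis using nn[of x] nn[of y] by simp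
qed

lemma J_sq:
  assumes "complex_structure J"
  shows "J (J x) = - x"
proof -
  have "J o\<^sub>L J = - id_blinfun" using assms by (simp add: complex_structure_def)
  then have "(J o\<^sub>L J) x = (- id_blinfun) x" by simp
  then show ?thesis by (simp add: blinfun.minus_left)
qed

lemma J_skew:
  assumes "complex_structure J"
  shows "J x \<bullet> y = - (x \<bullet> J (y::'a::real_inner))"
proof -
  have "J x \<bullet> y = J (J x) \<bullet> J y" using J_orth[OF assms] by simp
  then show ?thesis using J_sq[OF assms] by simp
qed

lemma main_construction:
  fixes J :: "'a::{real_inner,complete_space} \<Rightarrow>\<^sub>L 'a"
    and T :: "real \<Rightarrow> ('a \<Rightarrow>\<^sub>L 'a)"
  assumes cs: "complex_structure J"
    and cl: "\<forall>t\<ge>0. complex_linear_op J (T t)"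
    and C0: "C0_semigroup T"
    and t': "t' > 0" and bb: "bounded_below (T t')"
    and tau: "\<tau> > 0" and ip: "invertible_pair J S S'"
    and con: "norm (S o\<^sub>L T \<tau> o\<^sub>L S') \<le> 1"
  shows "similar_to_contraction_semigroup J T"
proof -
  have SJ: "S o\<^sub>L J = J o\<^sub>L S" and SS': "S o\<^sub>L S' = id_blinfun" and S'S: "S' o\<^sub>L S = id_blinfun"
    using ip by (auto simp: invertible_pair_def complex_linear_op_def)
  have TJ: "T t (J x) = J (T t x)" if "t \<ge> 0" for t x
  proof -
    have "T t o\<^sub>L J = J o\<^sub>L T t" using cl that by (auto simp: complex_linear_op_def)
    then have "(T t o\<^sub>L J) x = (J o\<^sub>L T t) x" by simp
    then show ?thesis by simp
  qed
  have SJx: "S (J x) = J (S x)" for x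
  proof -
    have "(S o\<^sub>L J) x = (J o\<^sub>L S) x" using SJ by simp
    then show ?thesis by simp
  qed
  have S'Sx: "S' (S x) = x" for x
  proof -
    have "(S' o\<^sub>L S) x = x" using S'S by simp
    then show ?thesis by simp
  qed
  define A where "A t = S o\<^sub>L T t" for t
  obtain M where M: "M \<ge> 1" "\<And>t. 0 \<le> t \<and> t \<le> \<tau> \<Longrightarrow> norm (T t) \<le> M"
    using C0_bound[OF C0, of \<tau>] by blast
  define Ms where "Ms = norm S * M"
  have Ms0: "Ms \<ge> 0" using M by (simp add: Ms_def)
  have Abound: "norm (A t h) \<le> Ms * norm h" if "0 \<le> t" "t \<le> \<tau>" for t h
  proof -
    have "norm (A t h) \<le> norm S * norm (T t h)" by (simp add: A_def norm_blinfun)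
    also have "\<dots> \<le> norm S * (M * norm h)"
    proof (intro mult_left_mono)
      have "norm (T t h) \<le> norm (T t) * norm h" by (rule norm_blinfun)
      also have "\<dots> \<le> M * norm h" using M(2)[of t] that by (intro mult_right_mono) auto
      finally show "norm (T t h) \<le> M * norm h" .
    qed simp
    finally show ?thesis by (simp add: Ms_def mult.assoc)
  qed
  obtain cT where cT: "cT > 0" "\<And>t h. 0 \<le> t \<and> t \<le> \<tau> \<Longrightarrow> cT * norm h \<le> norm (T t h)"
    using C0_below[OF C0 t' bb, of \<tau>] by blast
  define cA where "cA = cT / (norm S' + 1)"
  have cA: "cA > 0" using cT by (simp add: cA_def add_nonneg_pos)
  have Alow: "cA * norm h \<le> norm (A t h)" if "0 \<le> t" "t \<le> \<tau>" for t h
  proof -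
    have "cT * norm h \<le> norm (T t h)" using cT(2) that by blast
    also have "T t h = S' (A t h)" by (simp add: A_def S'Sx)
    also have "norm (S' (A t h)) \<le> norm S' * norm (A t h)" by (rule norm_blinfun)
    also have "\<dots> \<le> (norm S' + 1) * norm (A t h)" by (intro mult_right_mono) auto
    finally have "cT * norm h \<le> (norm S' + 1) * norm (A t h)" .
    moreover have "norm S' + 1 > 0" by (simp add: add_nonneg_pos)
    ultimately show ?thesis unfolding cA_def by (simp add: divide_le_eq mult.commute mult.left_commute)
  qed
  have contA: "continuous_on {0..} (\<lambda>t. A t h)" for h
    unfolding A_def using C0_cont[OF C0, of h]
    by (auto intro!: continuous_intros)
  have cont: "continuous_on {0..} (\<lambda>t. A t h \<bullet> A t k)" for h k
    using contA[of h] contA[of k] by (rule continuous_on_inner)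
  have integ: "(\<lambda>t. A t h \<bullet> A t k) integrable_on {a..b}" if "0 \<le> a" for h k a b
    by (rule integrable_continuous_interval, rule continuous_on_subset[OF cont]) (use that in auto)
  define q where "q h k = integral {0..\<tau>} (\<lambda>t. A t h \<bullet> A t k)" for h k
  have qbb: "bounded_bilinear q"
  proof
    fix a a' b b' :: 'a and r :: real
    show "q (a + a') b = q a b + q a' b"
      unfolding q_def by (simp add: blinfun.add_right inner_add_left integral_add integ)
    show "q a (b + b') = q a b + q a b'"
      unfolding q_def by (simp add: blinfun.add_right inner_add_right integral_add integ)
    show "q (r *\<^sub>R a) b = r *\<^sub>R q a b"
      unfolding q_def by (simp add: blinfun.scaleR_right)
    show "q a (r *\<^sub>R b) = r *\<^sub>R q a b"
      unfolding q_def by (simp add: blinfun.scaleR_right)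
  next
    show "\<exists>K. \<forall>a b. norm (q a b) \<le> norm a * norm b * K"
    proof (intro exI allI)
      fix a b :: 'a
      have "norm (q a b) \<le> (Ms * norm a * (Ms * norm b)) * Henstock_Kurzweil_Integration.content {0..\<tau>}"
        unfolding q_def
      proof (rule has_integral_bound_real[where S="{}"])
        show "0 \<le> Ms * norm a * (Ms * norm b)" using Ms0 by simp
        show "((\<lambda>t. A t a \<bullet> A t b) has_integral integral {0..\<tau>} (\<lambda>t. A t a \<bullet> A t b)) {0..\<tau>}"
          using integ by blast
        fix x assume "x \<in> {0..\<tau>} - {}"
        then have x: "0 \<le> x" "x \<le> \<tau>" by auto
        have "norm (A x a \<bullet> A x b) \<le> norm (A x a) * norm (A x b)"
          using Cauchy_Schwarz_ineq2 by simp
        also have "\<dots> \<le> Ms * norm a * (Ms * norm b)"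
          using Abound[OF x, of a] Abound[OF x, of b] Ms0 by (intro mult_mono) auto
        finally show "norm (A x a \<bullet> A x b) \<le> Ms * norm a * (Ms * norm b)" .
      qed simp
      then show "norm (q a b) \<le> norm a * norm b * (Ms * Ms * \<tau>)"
        using tau by (simp add: algebra_simps)
    qed
  qed
  obtain G :: "'a \<Rightarrow>\<^sub>L 'a" where Gq: "\<And>h k. G h \<bullet> k = q h k"
    using gram_op[OF qbb] by blast
  have qsym: "q h k = q k h" for h k unfolding q_def by (simp add: inner_commute)
  have Gsym: "G x \<bullet> y = x \<bullet> G y" for x y
    using Gq[of x y] Gq[of y x] qsym[of x y] by (simp add: inner_commute)
  define m where "m = \<tau> * cA^2"
  define Mq where "Mq = \<tau> * Ms^2 + m"
  have m0: "m > 0" using tau cA by (simp add: m_def)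
  have Mq0: "Mq > 0" using m0 tau by (simp add: Mq_def add_nonneg_pos)
  have Glow: "m * (x \<bullet> x) \<le> G x \<bullet> x" for x
  proof -
    have "integral {0..\<tau>} (\<lambda>t. cA^2 * (x \<bullet> x)) \<le> integral {0..\<tau>} (\<lambda>t. A t x \<bullet> A t x)"
    proof (rule integral_le)
      show "(\<lambda>t. A t x \<bullet> A t x) integrable_on {0..\<tau>}" by (rule integ) simp
      show "(\<lambda>t. cA^2 * (x \<bullet> x)) integrable_on {0..\<tau>}" by (rule integrable_continuous_interval) (intro continuous_intros)
      fix t assume "t \<in> {0..\<tau>}"
      then have "cA * norm x \<le> norm (A t x)" using Alow by auto
      then have "(cA * norm x)^2 \<le> (norm (A t x))^2" using cA by (intro power_mono) auto
      then show "cA^2 * (x \<bullet> x) \<le> A t x \<bullet> A t x"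
        by (simp add: power_mult_distrib power2_norm_eq_inner)
    qed
    then show ?thesis using tau by (simp add: Gq q_def m_def algebra_simps)
  qed
  have Gup: "G x \<bullet> x \<le> Mq * (x \<bullet> x)" for x
  proof -
    have "integral {0..\<tau>} (\<lambda>t. A t x \<bullet> A t x) \<le> integral {0..\<tau>} (\<lambda>t. Ms^2 * (x \<bullet> x))"
    proof (rule integral_le)
      show "(\<lambda>t. A t x \<bullet> A t x) integrable_on {0..\<tau>}" by (rule integ) simp
      show "(\<lambda>t. Ms^2 * (x \<bullet> x)) integrable_on {0..\<tau>}" by (rule integrable_continuous_interval) (intro continuous_intros)
      fix t assume "t \<in> {0..\<tau>}"
      then have "norm (A t x) \<le> Ms * norm x" using Abound by auto
      then have "(norm (A t x))^2 \<le> (Ms * norm x)^2" by (intro power_mono) auto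
      then show "A t x \<bullet> A t x \<le> Ms^2 * (x \<bullet> x)"
        by (simp add: power_mult_distrib power2_norm_eq_inner)
    qed
    then have "G x \<bullet> x \<le> \<tau> * Ms^2 * (x \<bullet> x)" using tau by (simp add: Gq q_def algebra_simps)
    also have "\<dots> \<le> Mq * (x \<bullet> x)"
      using m0 by (intro mult_right_mono) (auto simp: Mq_def)
    finally show ?thesis .
  qed
  define K where "K = id_blinfun - (1 / Mq) *\<^sub>R G"
  have Kx: "K x \<bullet> y = x \<bullet> y - (1 / Mq) * (G x \<bullet> y)" for x y
    by (simp add: K_def blinfun.diff_left blinfun.scaleR_left inner_diff_left)
  have Ksym: "K x \<bullet> y = x \<bullet> K y" for x y
    using Kx[of x y] Kx[of y x] Gsym[of x y] by (simp add: inner_commute)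
  have Kpos: "0 \<le> K x \<bullet> x" for x
  proof -
    have "(1 / Mq) * (G x \<bullet> x) \<le> (1 / Mq) * (Mq * (x \<bullet> x))"
      using Gup[of x] Mq0 by (intro mult_left_mono) auto
    then show ?thesis using Mq0 by (simp add: Kx)
  qed
  have Kup: "K x \<bullet> x \<le> (1 - m / Mq) * (x \<bullet> x)" for x
  proof -
    have "(1 / Mq) * (m * (x \<bullet> x)) \<le> (1 / Mq) * (G x \<bullet> x)"
      using Glow[of x] Mq0 by (intro mult_left_mono) auto
    then show ?thesis by (simp add: Kx algebra_simps)
  qed
  have mMq: "m / Mq \<le> 1" using m0 Mq0 tau by (simp add: Mq_def)
  have nK: "norm K < 1"
  proof -
    have "norm K \<le> 1 - m / Mq"
      using Ksym Kpos Kup mMq by (intro pos_sym_norm_le) auto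
    also have "\<dots> < 1" using m0 Mq0 by simp
    finally show ?thesis .
  qed
  have AJ: "A t (J h) = J (A t h)" if "t \<ge> 0" for t h
    using that by (simp add: A_def TJ SJx)
  have qJ: "q (J h) k = - q h (J k)" for h k
  proof -
    have "(\<lambda>t. A t (J h) \<bullet> A t k) = (\<lambda>t. if 0 \<le> t then - (A t h \<bullet> A t (J k)) else A t (J h) \<bullet> A t k)"
      by (auto simp: AJ J_skew[OF cs])
    then have "q (J h) k = integral {0..\<tau>} (\<lambda>t. if 0 \<le> t then - (A t h \<bullet> A t (J k)) else A t (J h) \<bullet> A t k)"
      by (simp add: q_def)
    also have "\<dots> = integral {0..\<tau>} (\<lambda>t. - (A t h \<bullet> A t (J k)))"
      by (rule integral_cong) auto
    finally show ?thesis by (simp add: q_def)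
  qed
  have GJ: "G (J h) = J (G h)" for h
  proof -
    have "G (J h) \<bullet> k = J (G h) \<bullet> k" for k
      using qJ[of h k] by (simp add: Gq J_skew[OF cs])
    then have "(G (J h) - J (G h)) \<bullet> (G (J h) - J (G h)) = 0"
      by (simp add: inner_diff_left inner_diff_right)
    then show ?thesis by simp
  qed
  have JK: "J o\<^sub>L K = K o\<^sub>L J"
    by (rule blinfun_eqI) (simp add: K_def blinfun.diff_left blinfun.scaleR_left blinfun.diff_right blinfun.scaleR_right GJ)
  obtain R Ri where RR: "R o\<^sub>L R = id_blinfun - K" and Rsym: "\<And>x y. R x \<bullet> y = x \<bullet> R y"
    and RRi: "R o\<^sub>L Ri = id_blinfun" and RiR: "Ri o\<^sub>L R = id_blinfun"
    and RJ: "J o\<^sub>L R = R o\<^sub>L J"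
    using op_sqrt[OF Ksym nK] JK by blast
  have normR: "(norm (R z))^2 = (1 / Mq) * (G z \<bullet> z)" for z
  proof -
    have "(norm (R z))^2 = R (R z) \<bullet> z" by (simp add: power2_norm_eq_inner Rsym)
    also have "R (R z) = (R o\<^sub>L R) z" by simp
    also have "\<dots> = z - K z" by (simp add: RR blinfun.diff_left)
    finally show ?thesis by (simp add: inner_diff_left Kx)
  qed
  have qc1: "q (T s h) (T s h) \<le> q h h" if "0 \<le> s" "s \<le> \<tau>" for s h
  proof -
    define f where "f u = A u h \<bullet> A u h" for u
    have "q (T s h) (T s h) = integral {0..\<tau>} (\<lambda>t. f (t + s))"
    proof -
      have "q (T s h) (T s h) = integral {0..\<tau>} (\<lambda>t. if 0 \<le> t then f (t + s) else A t (T s h) \<bullet> A t (T s h))"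
        unfolding q_def
      proof (rule integral_cong)
        fix t assume "t \<in> {0..\<tau>}"
        then have "T (t + s) = T t o\<^sub>L T s" using C0D(2)[OF C0, of t s] that by auto
        then have "A t (T s h) = A (t + s) h" by (simp add: A_def)
        then show "A t (T s h) \<bullet> A t (T s h) = (if 0 \<le> t then f (t + s) else A t (T s h) \<bullet> A t (T s h))"
          using \<open>t \<in> {0..\<tau>}\<close> by (simp add: f_def)
      qed
      also have "\<dots> = integral {0..\<tau>} (\<lambda>t. f (t + s))" by (rule integral_cong) auto
      finally show ?thesis .
    qed
    also have "\<dots> \<le> integral {0..\<tau>} f"
    proof (rule shift_contr[OF _ tau that])
      show "continuous_on {0..} f" unfolding f_def by (rule cont)
      fix v assume v: "0 \<le> v" "v \<le> \<tau>"
      have "T (v + \<tau>) = T \<tau> o\<^sub>L T v" using C0D(2)[OF C0, of \<tau> v] v tau by (simp add: add.commute)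
      then have "A (v + \<tau>) h = (S o\<^sub>L T \<tau> o\<^sub>L S') (A v h)" by (simp add: A_def S'Sx)
      then have "norm (A (v + \<tau>) h) \<le> norm (S o\<^sub>L T \<tau> o\<^sub>L S') * norm (A v h)"
        using norm_blinfun[of "S o\<^sub>L T \<tau> o\<^sub>L S'" "A v h"] by simp
      also have "\<dots> \<le> 1 * norm (A v h)" using con by (intro mult_right_mono) auto
      finally have "(norm (A (v + \<tau>) h))^2 \<le> (norm (A v h))^2" by (intro power_mono) auto
      then show "f (v + \<tau>) \<le> f v" by (simp add: f_def power2_norm_eq_inner)
    qed
    also have "\<dots> = q h h" unfolding q_def f_def[abs_def] ..
    finally show ?thesis .
  qed
  have qcn: "\<forall>s h. 0 \<le> s \<and> s \<le> real n * \<tau> \<longrightarrow> q (T s h) (T s h) \<le> q h h" for n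
  proof (induction n)
    case 0
    then show ?case using C0D(1)[OF C0] by auto
  next
    case (Suc n)
    show ?case
    proof (intro allI impI)
      fix s h assume s: "0 \<le> s \<and> s \<le> real (Suc n) * \<tau>"
      show "q (T s h) (T s h) \<le> q h h"
      proof (cases "s \<le> \<tau>")
        case True then show ?thesis using qc1 s by blast
      next
        case False
        have "T s = T \<tau> o\<^sub>L T (s - \<tau>)" using C0D(2)[OF C0, of \<tau> "s - \<tau>"] False tau by simp
        then have "q (T s h) (T s h) = q (T \<tau> (T (s - \<tau>) h)) (T \<tau> (T (s - \<tau>) h))" by simp
        also have "\<dots> \<le> q (T (s - \<tau>) h) (T (s - \<tau>) h)" using qc1[of \<tau>] tau by simp
        also have "\<dots> \<le> q h h" using Suc.IH False s by (auto simp: algebra_simps)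
        finally show ?thesis .
      qed
    qed
  qed
  have qc: "q (T s h) (T s h) \<le> q h h" if "0 \<le> s" for s h
  proof -
    obtain n :: nat where "s / \<tau> < real n" using reals_Archimedean2 by blast
    then have "s \<le> real n * \<tau>" using tau by (simp add: field_simps)
    then show ?thesis using qcn[of n] that by blast
  qed
  have "norm (R o\<^sub>L T t o\<^sub>L Ri) \<le> 1" if t: "t \<ge> 0" for t
  proof (rule norm_blinfun_bound)
    fix x
    define y where "y = Ri x"
    have Ry: "R y = x" unfolding y_def
    proof -
      have "(R o\<^sub>L Ri) x = x" using RRi by simp
      then show "R (Ri x) = x" by simp
    qed
    have "(norm (R (T t y)))^2 = (1 / Mq) * q (T t y) (T t y)" by (simp add: normR Gq)
    also have "\<dots> \<le> (1 / Mq) * q y y" using qc[OF t, of y] Mq0 by (intro mult_left_mono) auto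
    also have "\<dots> = (norm (R y))^2" by (simp add: normR Gq)
    finally have "norm (R (T t y)) \<le> norm (R y)" by (simp add: power2_le_iff_abs_le)
    moreover have "(R o\<^sub>L T t o\<^sub>L Ri) x = R (T t y)" by (simp add: y_def)
    ultimately show "norm ((R o\<^sub>L T t o\<^sub>L Ri) x) \<le> 1 * norm x" using Ry by simp
  qed simp
  moreover have "invertible_pair J R Ri"
    using RJ RRi RiR by (simp add: invertible_pair_def complex_linear_op_def)
  ultimately show ?thesis unfolding similar_to_contraction_semigroup_def by blast
qed

lemma scaled_semigroup:
  fixes J :: "'a::{real_inner,complete_space} \<Rightarrow>\<^sub>L 'a"
    and T :: "real \<Rightarrow> ('a \<Rightarrow>\<^sub>L 'a)" and w :: real
  assumes cl: "\<forall>t\<ge>0. complex_linear_op J (T t)"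
    and C0: "C0_semigroup T"
    and bb: "bounded_below (T t')"
  defines "T2 \<equiv> \<lambda>t. exp (- w * t) *\<^sub>R T t"
  shows "\<forall>t\<ge>0. complex_linear_op J (T2 t)" "C0_semigroup T2" "bounded_below (T2 t')"
proof -
  interpret bb: bounded_bilinear "(o\<^sub>L) :: ('a \<Rightarrow>\<^sub>L 'a) \<Rightarrow> _ \<Rightarrow> _"
    by (rule bounded_bilinear_blinfun_compose)
  show "\<forall>t\<ge>0. complex_linear_op J (T2 t)"
    using cl by (simp add: T2_def complex_linear_op_def bb.scaleR_left bb.scaleR_right)
  show "C0_semigroup T2"
    unfolding C0_semigroup_def
  proof (intro conjI allI impI)
    show "T2 0 = id_blinfun" using C0D(1)[OF C0] by (simp add: T2_def)
    fix s t :: real assume "0 \<le> s" "0 \<le> t"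
    then have "T (s + t) = T s o\<^sub>L T t" by (rule C0D(2)[OF C0])
    then show "T2 (s + t) = T2 s o\<^sub>L T2 t"
      by (simp add: T2_def bb.scaleR_left bb.scaleR_right algebra_simps exp_add[symmetric])
  next
    fix x
    have "((\<lambda>t. exp (- w * t)) \<longlongrightarrow> exp (- w * 0)) (at_right 0)"
      by (intro tendsto_intros)
    then have "((\<lambda>t. exp (- w * t) *\<^sub>R T t x) \<longlongrightarrow> 1 *\<^sub>R x) (at_right 0)"
      using C0D(3)[OF C0, of x] by (intro tendsto_scaleR) auto
    then show "((\<lambda>t. T2 t x) \<longlongrightarrow> x) (at_right 0)" by (simp add: T2_def blinfun.scaleR_left)
  qed
  obtain c where c: "c > 0" "\<And>h. c * norm h \<le> norm (T t' h)" using bb unfolding bounded_below_def by blast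
  show "bounded_below (T2 t')" unfolding bounded_below_def
  proof (intro exI[of _ "exp (- w * t') * c"] conjI allI)
    show "exp (- w * t') * c > 0" using c by simp
    fix h
    show "exp (- w * t') * c * norm h \<le> norm (T2 t' h)"
      using mult_left_mono[OF c(2)[of h], of "exp (- w * t')"] by (simp add: T2_def mult.assoc blinfun.scaleR_left)
  qed
qed

theorem proposition4p11:
  fixes J :: "'a::{real_inner,complete_space} \<Rightarrow>\<^sub>L 'a"
    and T :: "real \<Rightarrow> ('a \<Rightarrow>\<^sub>L 'a)"
    and t' :: real
  assumes "complex_structure J"
    and "\<forall>t\<ge>0. complex_linear_op J (T t)"
    and "C0_semigroup T"
    and "t' > 0" and "bounded_below (T t')"
  shows "(similar_to_contraction_semigroup J T \<longleftrightarrow> (\<exists>\<tau>>0. similar_to_contraction J (T \<tau>)))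
         \<and> similar_to_quasi_contraction_semigroup J T"
proof (intro conjI iffI)
  assume "similar_to_contraction_semigroup J T"
  then show "\<exists>\<tau>>0. similar_to_contraction J (T \<tau>)"
    unfolding similar_to_contraction_semigroup_def similar_to_contraction_def
    by (intro exI[of _ 1]) (auto intro: zero_le_one)
next
  assume "\<exists>\<tau>>0. similar_to_contraction J (T \<tau>)"
  then obtain \<tau> S S' where "\<tau> > 0" "invertible_pair J S S'" "norm (S o\<^sub>L T \<tau> o\<^sub>L S') \<le> 1"
    unfolding similar_to_contraction_def by blast
  then show "similar_to_contraction_semigroup J T"
    using main_construction[OF assms] by blast
next
  interpret bb: bounded_bilinear "(o\<^sub>L) :: ('a \<Rightarrow>\<^sub>L 'a) \<Rightarrow> _ \<Rightarrow> _"
    by (rule bounded_bilinear_blinfun_compose)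
  define w where "w = ln (norm (T 1) + 1)"
  define T2 where "T2 = (\<lambda>t. exp (- w * t) *\<^sub>R T t)"
  have sc: "\<forall>t\<ge>0. complex_linear_op J (T2 t)" "C0_semigroup T2" "bounded_below (T2 t')"
    using scaled_semigroup[OF assms(2,3,5), where w=w] unfolding T2_def by auto
  have ew: "exp w = norm (T 1) + 1" unfolding w_def by (simp add: add_nonneg_pos)
  have "norm (T2 1) \<le> 1"
  proof -
    have "norm (T2 1) = norm (T 1) / (norm (T 1) + 1)"
      by (simp add: T2_def exp_minus ew divide_inverse_commute)
    also have "\<dots> \<le> 1" by (simp add: add_nonneg_pos)
    finally show ?thesis .
  qed
  moreover have "invertible_pair J id_blinfun id_blinfun"
    by (simp add: invertible_pair_def complex_linear_op_def)
  ultimately have "similar_to_contraction_semigroup J T2"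
    using main_construction[OF assms(1) sc(1) sc(2) assms(4) sc(3), of 1 id_blinfun id_blinfun] by simp
  then obtain R R' where RR: "invertible_pair J R R'" "\<And>t. t \<ge> 0 \<Longrightarrow> norm (R o\<^sub>L T2 t o\<^sub>L R') \<le> 1"
    unfolding similar_to_contraction_semigroup_def by blast
  have "norm (R o\<^sub>L T t o\<^sub>L R') \<le> exp (w * t)" if "t \<ge> 0" for t
  proof -
    have "R o\<^sub>L T t o\<^sub>L R' = exp (w * t) *\<^sub>R (R o\<^sub>L T2 t o\<^sub>L R')"
      by (simp add: T2_def bb.scaleR_left bb.scaleR_right exp_minus field_simps)
    then have "norm (R o\<^sub>L T t o\<^sub>L R') = exp (w * t) * norm (R o\<^sub>L T2 t o\<^sub>L R')" by simp
    also have "\<dots> \<le> exp (w * t) * 1" using RR(2)[OF that] by (intro mult_left_mono) auto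
    finally show ?thesis by simp
  qed
  then show "similar_to_quasi_contraction_semigroup J T"
    unfolding similar_to_quasi_contraction_semigroup_def using RR(1) by blast
qed

end
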